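(* Let $(X,\mathcal F)$ be a measurable space in which every singleton $\{t\}$, $t\in X$, belongs to $\mathcal F$, and let $g,h\colon X\to[0,\infty)$ be measurable with $\inf_{x\in X} g(x)h(x)=0$. Then there is no functional $c\colon\mathcal M\to[0,\infty)$ such that for every $\mu\in\mathcal M$ and every measurable $f\colon X\to[0,\infty)$ with $\int_X f\,d\mu<\infty$, $$\int_X f\,d\mu\le c(\mu)\Big(\int_X g f^2\,d\mu\Big)^{1/4}\Big(\int_X h f^2\,d\mu\Big)^{1/4},$$ where all integrals are Choquet integrals.
   Context: $\mathcal M$ denotes the set of monotone measures on $(X,\mathcal F)$, i.e. maps $\mu\colon\mathcal F\to[0,\infty]$ with $\mu(\emptyset)=0$, $\mu(X)>0$ and $\mu(A)\le\mu(B)$ for $A\subset B$. The Choquet integral of a measurable $f\colon X\to[0,\infty)$ on $A\in\mathcal F$ is $\int_A f\,d\mu=\int_0^\infty\mu(A\cap\{f\ge t\})\,dt$ (improper Riemann integral). *)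

theory Defs
  imports "HOL-Analysis.Analysis"
begin

text \<open>A monotone measure is a set function on sets M with values in [0,\<infinity>];
  we represent it as a total function that is 0 outside sets M (extensional),
  so that such functions correspond bijectively to monotone measures.\<close>
definition monotone_measure :: "'a measure \<Rightarrow> ('a set \<Rightarrow> ennreal) \<Rightarrow> bool" where
  "monotone_measure M \<mu> \<longleftrightarrow>
     \<mu> {} = 0 \<and> \<mu> (space M) > 0 \<and>
     (\<forall>A\<in>sets M. \<forall>B\<in>sets M. A \<subseteq> B \<longrightarrow> \<mu> A \<le> \<mu> B) \<and>
     (\<forall>A. A \<notin> sets M \<longrightarrow> \<mu> A = 0)"

text \<open>Choquet integral of f over A: the integral over t in [0,\<infinity>) of
  \<mu>(A \<inter> {f \<ge> t}).  The integrand is nonincreasing in t, so the improper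
  Riemann integral coincides with the Lebesgue integral w.r.t. lborel.\<close>
definition choquet :: "'a measure \<Rightarrow> ('a set \<Rightarrow> ennreal) \<Rightarrow> 'a set \<Rightarrow> ('a \<Rightarrow> real) \<Rightarrow> ennreal" where
  "choquet M \<mu> A f = (\<integral>\<^sup>+ t \<in> {0..}. \<mu> (A \<inter> {x \<in> space M. f x \<ge> t}) \<partial>lborel)"

definition root4_ennreal :: "ennreal \<Rightarrow> ennreal" where
  "root4_ennreal x = (if x = top then top else ennreal (enn2real x powr (1/4)))"

end

theory Submission
  imports Defs
begin

definition nemu :: "'a measure \<Rightarrow> 'a set \<Rightarrow> ennreal" where
  "nemu M A = (if A \<in> sets M \<and> A \<noteq> {} then 1 else 0)"

lemma nemu_mm: "space M \<noteq> {} \<Longrightarrow> monotone_measure M (nemu M)"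
  unfolding monotone_measure_def nemu_def by auto

lemma choquet_ind:
  assumes "t \<in> space M" "{t} \<in> sets M" "a \<ge> 0"
  shows "choquet M (nemu M) (space M) (\<lambda>x. a * indicator {t} x) = ennreal a"
proof -
  have "\<And>s. nemu M (space M \<inter> {x \<in> space M. s \<le> a * indicator {t} x}) * indicator {0..} s
        = indicator {0..a} s"
  proof -
    fix s :: real
    show "nemu M (space M \<inter> {x \<in> space M. s \<le> a * indicator {t} x}) * indicator {0..} s
        = indicator {0..a} s"
    proof (cases "s \<le> 0")
      case True
      then have "space M \<inter> {x \<in> space M. s \<le> a * indicator {t} x} = space M"
        using assms by (auto simp: indicator_def)
      then show ?thesis using True assms by (auto simp: nemu_def indicator_def)
    next
      case False
      then have "space M \<inter> {x \<in> space M. s \<le> a * indicator {t} x} = (if s \<le> a then {t} else {})"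
        using assms by (auto simp: indicator_def)
      then show ?thesis using False assms by (auto simp: nemu_def indicator_def)
    qed
  qed
  then have "choquet M (nemu M) (space M) (\<lambda>x. a * indicator {t} x) = (\<integral>\<^sup>+ s. indicator {0..a} s \<partial>lborel)"
    unfolding choquet_def by simp
  also have "\<dots> = ennreal a" using assms by simp
  finally show ?thesis .
qed

lemma root4: "a \<ge> 0 \<Longrightarrow> root4_ennreal (ennreal a) = ennreal (a powr (1/4))"
  unfolding root4_ennreal_def by simp

theorem mainTheorem4:
  fixes M :: "'a measure" and g h :: "'a \<Rightarrow> real"
  assumes singletons: "\<forall>t\<in>space M. {t} \<in> sets M"
    and g_meas: "g \<in> borel_measurable M" and g_nonneg: "\<forall>x\<in>space M. g x \<ge> 0"
    and h_meas: "h \<in> borel_measurable M" and h_nonneg: "\<forall>x\<in>space M. h x \<ge> 0"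
    and nonempty: "space M \<noteq> {}"
    and inf_zero: "(INF x\<in>space M. g x * h x) = 0"
  shows "\<not> (\<exists>c :: ('a set \<Rightarrow> ennreal) \<Rightarrow> real.
            (\<forall>\<mu>. monotone_measure M \<mu> \<longrightarrow> c \<mu> \<ge> 0) \<and>
            (\<forall>\<mu> f. monotone_measure M \<mu> \<longrightarrow> f \<in> borel_measurable M \<longrightarrow>
                 (\<forall>x\<in>space M. f x \<ge> 0) \<longrightarrow> choquet M \<mu> (space M) f < \<infinity> \<longrightarrow>
                 choquet M \<mu> (space M) f
                   \<le> ennreal (c \<mu>)
                      * root4_ennreal (choquet M \<mu> (space M) (\<lambda>x. g x * (f x)\<^sup>2))
                      * root4_ennreal (choquet M \<mu> (space M) (\<lambda>x. h x * (f x)\<^sup>2))))"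
proof
  assume "\<exists>c :: ('a set \<Rightarrow> ennreal) \<Rightarrow> real.
            (\<forall>\<mu>. monotone_measure M \<mu> \<longrightarrow> c \<mu> \<ge> 0) \<and>
            (\<forall>\<mu> f. monotone_measure M \<mu> \<longrightarrow> f \<in> borel_measurable M \<longrightarrow>
                 (\<forall>x\<in>space M. f x \<ge> 0) \<longrightarrow> choquet M \<mu> (space M) f < \<infinity> \<longrightarrow>
                 choquet M \<mu> (space M) f
                   \<le> ennreal (c \<mu>)
                      * root4_ennreal (choquet M \<mu> (space M) (\<lambda>x. g x * (f x)\<^sup>2))
                      * root4_ennreal (choquet M \<mu> (space M) (\<lambda>x. h x * (f x)\<^sup>2)))"
  then obtain c where c0: "\<And>\<mu>. monotone_measure M \<mu> \<Longrightarrow> c \<mu> \<ge> 0" and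
    cI: "\<And>\<mu> f. monotone_measure M \<mu> \<Longrightarrow> f \<in> borel_measurable M \<Longrightarrow>
                 (\<forall>x\<in>space M. f x \<ge> 0) \<Longrightarrow> choquet M \<mu> (space M) f < \<infinity> \<Longrightarrow>
                 choquet M \<mu> (space M) f
                   \<le> ennreal (c \<mu>)
                      * root4_ennreal (choquet M \<mu> (space M) (\<lambda>x. g x * (f x)\<^sup>2))
                      * root4_ennreal (choquet M \<mu> (space M) (\<lambda>x. h x * (f x)\<^sup>2))"
    by blast
  define C where "C = c (nemu M)"
  have mm: "monotone_measure M (nemu M)" using nemu_mm nonempty .
  have C0: "C \<ge> 0" using c0[OF mm] C_def by simp
  have key: "1 \<le> C * (g t * h t) powr (1/4)" if t: "t \<in> space M" for t
  proof -
    let ?f = "indicator {t} :: 'a \<Rightarrow> real"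
    have st: "{t} \<in> sets M" using singletons t by auto
    have e1: "choquet M (nemu M) (space M) ?f = 1"
      using choquet_ind[OF t st, of 1] by simp
    have eg: "(\<lambda>x. g x * (?f x)\<^sup>2) = (\<lambda>x. g t * indicator {t} x)"
      by (auto simp: indicator_def)
    have eh: "(\<lambda>x. h x * (?f x)\<^sup>2) = (\<lambda>x. h t * indicator {t} x)"
      by (auto simp: indicator_def)
    have gt: "g t \<ge> 0" "h t \<ge> 0" using g_nonneg h_nonneg t by auto
    have "(1::ennreal) \<le> ennreal C * ennreal (g t powr (1/4)) * ennreal (h t powr (1/4))"
      using cI[OF mm, of ?f] e1 st
      by (simp add: eg eh choquet_ind[OF t st] gt root4 C_def borel_measurable_indicator)
    also have "\<dots> = ennreal (C * (g t * h t) powr (1/4))"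
    proof -
      have "ennreal (C * (g t * h t) powr (1/4)) = ennreal C * ennreal (g t powr (1/4) * h t powr (1/4))"
        using C0 gt by (simp only: powr_mult ennreal_mult[OF C0 mult_nonneg_nonneg[OF powr_ge_zero powr_ge_zero]])
      also have "\<dots> = ennreal C * (ennreal (g t powr (1/4)) * ennreal (h t powr (1/4)))"
        by (subst ennreal_mult) auto
      finally show ?thesis by (simp only: mult.assoc)
    qed
    finally show ?thesis
      unfolding ennreal_1[symmetric] ennreal_le_iff2 by auto
  qed
  define e where "e = (1 / (C + 1)) ^ 4"
  have epos: "e > 0" using C0 e_def by simp
  have bdd: "bdd_below ((\<lambda>x. g x * h x) ` space M)"
    using g_nonneg h_nonneg by (intro bdd_belowI[of _ 0]) auto
  obtain t where t: "t \<in> space M" "g t * h t < e"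
    using cINF_less_iff[OF nonempty bdd, of e] inf_zero epos nonempty by auto
  have nn: "g t * h t \<ge> 0" using g_nonneg h_nonneg t by auto
  have "(g t * h t) powr (1/4) < e powr (1/4)"
    using t nn by (intro powr_less_mono2) auto
  also have "e powr (1/4) = 1 / (C + 1)"
  proof -
    have p: "1 / (C + 1) > 0" using C0 by simp
    have "e = (1 / (C + 1)) powr (real 4)"
      unfolding e_def using powr_realpow[OF p, of 4] by simp
    then have "e powr (1/4) = (1 / (C + 1)) powr (real 4 * (1/4))"
      by (simp only: powr_powr)
    also have "\<dots> = 1 / (C + 1)" using p by simp
    finally show ?thesis .
  qed
  finally have "C * (g t * h t) powr (1/4) \<le> C * (1/(C+1))"
    using C0 by (intro mult_left_mono) auto
  also have "\<dots> < 1" using C0 by (simp add: field_simps)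
  finally have "C * (g t * h t) powr (1/4) < 1" .
  with key[OF t(1)] show False by linarith
qed

end
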